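(* Let $w\in\Sigma^*$ with $\iota(w)\ge 2$ and let $u$ be a nonempty scattered factor of $w$ with $|u|<\iota(w)$. If $u[1]\neq\operatorname{m}(w)[1]$, then $|C(w,u)|>1$.
   Context: The alphabet $\Sigma$ is exactly the set of letters occurring in $w$, with $|\Sigma|\ge2$. The universality index $\iota(w)$ is the largest $k$ such that every word in $\Sigma^k$ is a scattered factor (subsequence) of $w$. The arch factorisation of $w$ is $w=\operatorname{ar}_1(w)\cdots\operatorname{ar}_k(w)\operatorname{r}(w)$ where each arch contains every letter of $\Sigma$ and its last letter does not occur elsewhere in it, and $\operatorname{r}(w)$ does not contain all letters of $\Sigma$; then $k=\iota(w)$. The modus $\operatorname{m}(w)$ is the word of last letters of the arches in order. An embedding of $u$ in $w$ is a map $e:\{1,\dots,|u|\}\to\{1,\dots,|w|\}$ with $e(1)<\dots<e(|u|)$ and $u[i]=w[e(i)]$. The shuffle $\mathrm{Sh}(u,v)$ is the set of words of length $|u|+|v|$ admitting an embedding of $u$ and one of $v$ with disjoint images covering all positions, and $C(w,u)=\{v\in\Sigma^{|w|-|u|}: w\in\mathrm{Sh}(u,v)\}$. *)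

theory Defs
  imports Main "HOL-Library.Sublist"
begin

text \<open>Alphabet of w is set w. Scattered factor = subseq (library).\<close>

definition iota :: "'a list \<Rightarrow> nat" where
  "iota w = (GREATEST k. \<forall>v. length v = k \<and> set v \<subseteq> set w \<longrightarrow> subseq v w)"

definition arch_len :: "'a set \<Rightarrow> 'a list \<Rightarrow> nat" where
  "arch_len S x = (LEAST n. S \<subseteq> set (take n x))"

definition arch_rest :: "'a set \<Rightarrow> 'a list \<Rightarrow> 'a list" where
  "arch_rest S x = drop (arch_len S x) x"

text \<open>The i-th arch (0-based) of w, w.r.t. the alphabet set w.\<close>
definition arch :: "'a list \<Rightarrow> nat \<Rightarrow> 'a list" where
  "arch w i = (let x = (arch_rest (set w) ^^ i) w in take (arch_len (set w) x) x)"

definition modus :: "'a list \<Rightarrow> 'a list" where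
  "modus w = map (\<lambda>i. last (arch w i)) [0..<iota w]"

definition Cset :: "'a list \<Rightarrow> 'a list \<Rightarrow> 'a list set" where
  "Cset w u = {v. length v = length w - length u \<and> set v \<subseteq> set w \<and> w \<in> shuffles u v}"

end

theory Submission
  imports Defs
begin

lemma shuf_prefix_right: "y \<in> shuffles u z \<Longrightarrow> p @ y \<in> shuffles u (p @ z)"
  by (induction p) (auto intro: Cons_in_shuffles_rightI)

lemma subseq_shuf: "subseq u y \<Longrightarrow> \<exists>z. y \<in> shuffles u z"
proof (induction rule: list_emb.induct)
  case (list_emb_Nil ys)
  then show ?case by (intro exI[of _ ys]) simp
next
  case (list_emb_Cons xs ys y)
  then obtain z where "ys \<in> shuffles xs z" by blast
  then show ?case by (blast intro: Cons_in_shuffles_rightI)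
next
  case (list_emb_Cons2 x y xs ys)
  then obtain z where "ys \<in> shuffles xs z" by blast
  then show ?case using list_emb_Cons2 by (blast intro: Cons_in_shuffles_leftI)
qed

lemma subseq_first: "subseq (b # t) (x @ b # y) \<Longrightarrow> b \<notin> set x \<Longrightarrow> subseq t y"
  by (induction x) (auto simp: subseq_Cons2_iff split: if_splits)

lemma iota_prop:
  assumes "set w \<noteq> {}"
  shows "\<forall>v. length v = iota w \<and> set v \<subseteq> set w \<longrightarrow> subseq v w"
proof -
  obtain s where s: "s \<in> set w" using assms by (meson ex_in_conv)
  let ?P = "\<lambda>k. \<forall>v. length v = k \<and> set v \<subseteq> set w \<longrightarrow> subseq v w"
  have "?P (Greatest ?P)"
  proof (rule GreatestI_nat[where k=0 and b="length w"])
    show "?P 0" by simp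
    show "y \<le> length w" if "?P y" for y
    proof -
      have "set (replicate y s) \<subseteq> set w" using s by (simp add: set_replicate_conv_if)
      then have "subseq (replicate y s) w" using spec[OF that, of "replicate y s"] by simp
      then have "length (replicate y s) \<le> length w" by (rule list_emb_length)
      then show "y \<le> length w" by simp
    qed
  qed
  then show ?thesis unfolding iota_def .
qed

lemma key:
  assumes "w = x @ b # y" "b \<notin> set x" "a \<in> set x" "a \<noteq> b" "subseq u y" "u \<noteq> []" "hd u = a"
  shows "card (Cset w u) > 1"
proof -
  obtain z where z: "y \<in> shuffles u z" using subseq_shuf assms(5) by blast
  have "subseq (tl u) y" using assms(5,6)
    by (metis list.collapse subseq_Cons')
  then obtain z' where z': "y \<in> shuffles (tl u) z'" using subseq_shuf by blast
  obtain x1 x2 where x: "x = x1 @ a # x2" using assms(3) by (meson split_list)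
  define v1 where "v1 = x @ b # z"
  define v2 where "v2 = x1 @ x2 @ b # z'"
  have w1: "w \<in> shuffles u v1" unfolding v1_def using shuf_prefix_right[OF z, of "x @ [b]"] assms(1) by simp
  have "x2 @ b # y \<in> shuffles (tl u) (x2 @ b # z')" using shuf_prefix_right[OF z', of "x2 @ [b]"] by simp
  then have "a # x2 @ b # y \<in> shuffles u (x2 @ b # z')" using assms(6,7)
    by (metis Cons_in_shuffles_leftI list.collapse)
  then have w2: "w \<in> shuffles u v2" unfolding v2_def using shuf_prefix_right[of "a # x2 @ b # y" u "x2 @ b # z'" x1] assms(1) x by simp
  have "takeWhile (\<lambda>c. c \<noteq> b) v1 = x" unfolding v1_def using assms(2) by (subst takeWhile_append2) auto
  moreover have "takeWhile (\<lambda>c. c \<noteq> b) v2 = x1 @ x2" unfolding v2_def using assms(2) x by (subst append_assoc[symmetric], subst takeWhile_append2) auto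
  ultimately have ne: "v1 \<noteq> v2" using x by auto
  have inC: "v \<in> Cset w u" if "w \<in> shuffles u v" for v
    using that length_shuffles[OF that] set_shuffles[OF that] unfolding Cset_def by auto
  have fin: "finite (Cset w u)"
    by (rule finite_subset[OF _ finite_lists_length_eq[of "set w" "length w - length u"]])
       (auto simp: Cset_def)
  have "{v1, v2} \<subseteq> Cset w u" using inC w1 w2 by auto
  then have "card {v1, v2} \<le> card (Cset w u)" using fin by (rule card_mono[rotated])
  then show ?thesis using ne by simp
qed

theorem lemma24:
  fixes w u :: "'a list"
  assumes "card (set w) \<ge> 2"
    and "iota w \<ge> 2"
    and "u \<noteq> []"
    and "subseq u w"
    and "length u < iota w"
    and "hd u \<noteq> hd (modus w)"
  shows "card (Cset w u) > 1"
proof -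
  define S where "S = set w"
  have uS0: "set u \<subseteq> set w" using assms(4) by (auto dest: list_emb_set)
  have Sne: "S \<noteq> {}" using assms(3) uS0 S_def by auto
  define n where "n = arch_len S w"
  have cov0: "S \<subseteq> set (take (length w) w)" by (simp add: S_def)
  have cov: "S \<subseteq> set (take n w)" unfolding n_def arch_len_def
    using LeastI[of "\<lambda>k. S \<subseteq> set (take k w)", OF cov0] .
  have min: "\<not> S \<subseteq> set (take (n - 1) w)" if "n > 0"
    using not_less_Least[of "n - 1" "\<lambda>k. S \<subseteq> set (take k w)"] that unfolding n_def arch_len_def by simp
  have npos: "n > 0" using cov Sne by (cases n) auto
  have nle: "n \<le> length w"
  proof (rule ccontr)
    assume "\<not> n \<le> length w"
    then have "S \<subseteq> set (take (n-1) w)" using S_def by simp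
    then show False using min npos by blast
  qed
  define b where "b = w ! (n - 1)"
  define x where "x = take (n - 1) w"
  define y where "y = drop n w"
  have nn: "n = Suc (n - 1)" "n - 1 < length w" using npos nle by auto
  have wdec: "w = x @ b # y" unfolding x_def b_def y_def
    using id_take_nth_drop[OF nn(2)] nn(1) by simp
  have tk: "take n w = x @ [b]" unfolding x_def b_def
    using take_Suc_conv_app_nth[OF nn(2)] nn(1) by simp
  have bx: "b \<notin> set x"
  proof
    assume "b \<in> set x"
    then have "set (take n w) = set x" using tk by auto
    then show False using cov min npos x_def by auto
  qed
  have arch0: "arch w 0 = x @ [b]" unfolding arch_def Let_def using tk n_def S_def by simp
  have hdm: "hd (modus w) = b" unfolding modus_def using assms(2) arch0
    by (simp add: upt_conv_Cons)
  define a where "a = hd u"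
  have aw: "a \<in> S" using assms(3) uS0 unfolding a_def S_def by auto
  have ab: "a \<noteq> b" using assms(6) hdm a_def by simp
  have ax: "a \<in> set x" using aw cov tk ab by auto
  define v where "v = b # u @ replicate (iota w - 1 - length u) b"
  have bS: "b \<in> S" using wdec S_def by auto
  have uS: "set u \<subseteq> S" using uS0 S_def by simp
  have "length v = iota w" unfolding v_def using assms(5) by simp
  moreover have "set v \<subseteq> set w" unfolding v_def using bS uS S_def by auto
  ultimately have "subseq v w"
    using iota_prop[of w] Sne S_def by blast
  then have "subseq (u @ replicate (iota w - 1 - length u) b) y"
    unfolding v_def using subseq_first[of b "u @ replicate (iota w - 1 - length u) b" x y] wdec bx by simp
  then obtain us vs where "y = us @ vs" "subseq u us" by (blast dest: list_emb_appendD)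
  then have "subseq u y" by (simp add: list_emb_prefix)
  then show ?thesis by (rule key[OF wdec bx ax ab _ assms(3) a_def[symmetric]])
qed

end
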